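(* Let $\rho$ and $\varrho$ be two-qubit states with correlation matrices $T$ and $F$, respectively, and let $t_1,t_2,t_3$ and $f_1,f_2,f_3$ be (signed) singular values of $T$ and $F$. Then $\rho$ and $\varrho$ have the same optimal CHSH operator if and only if the following three conditions hold: (1) $T$ and $F$ have the same orthogonal matrices in their singular value decompositions, i.e. $T=UDV$ and $F=UEV$ with $U,V$ real orthogonal $3\times3$ matrices, $D=\sum_{k=1}^3 t_k|k\rangle\langle k|$ and $E=\sum_{k=1}^3 f_k|k\rangle\langle k|$; (2) the two sets of absolute values $\{|t_k|\}$ and $\{|f_k|\}$ are in the same order (i.e. an index ordering that makes $|t_k|$ nonincreasing also makes $|f_k|$ nonincreasing); (3) labelling so that $|t_1|\ge|t_2|\ge|t_3|$ and $|f_1|\ge|f_2|\ge|f_3|$, one has $$\frac{t_1}{f_1}=\frac{t_2}{f_2}=\sqrt{\frac{t_1^2+t_2^2}{f_1^2+f_2^2}}.$$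
   Context: $\sigma_1,\sigma_2,\sigma_3$ are the Pauli matrices. The correlation matrix of a two-qubit state $\rho$ is the real $3\times3$ matrix $T$ with $T_{jk}=\mathrm{tr}(\rho\,\sigma_j\otimes\sigma_k)$. A singular value decomposition here means $T=UDV$ with $U,V$ real orthogonal and $D$ real diagonal, whose diagonal entries (the singular values) are allowed to carry signs. A CHSH operator is an operator $S=A\otimes(B+B')+A'\otimes(B-B')$ with $A=\vec a\cdot\vec\sigma$, $A'=\vec a'\cdot\vec\sigma$, $B=\vec b\cdot\vec\sigma$, $B'=\vec b'\cdot\vec\sigma$ for unit vectors $\vec a,\vec a',\vec b,\vec b'\in\mathbb{R}^3$. The nonlocality is $\mathcal{N}(\rho)=\max_S\mathrm{tr}(\rho S)$ over all CHSH operators; $S$ is an optimal CHSH operator of $\rho$ if $\mathrm{tr}(\rho S)=\mathcal{N}(\rho)$. Two states have the same optimal CHSH operator if some CHSH operator is optimal for both. *)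

theory Defs
  imports "HOL-Analysis.Analysis"
begin

text \<open>Qubit operators are 2x2 complex matrices indexed by the type 2;
two-qubit operators are 4x4 complex matrices indexed by the type 2 \<times> 2
(first component = first qubit, second component = second qubit).\<close>

type_synonym qop = "complex^2^2"
type_synonym qop2 = "complex^(2 \<times> 2)^(2 \<times> 2)"

definition sigma1 :: qop where "sigma1 = vector [vector [0, 1], vector [1, 0]]"
definition sigma2 :: qop where "sigma2 = vector [vector [0, - \<i>], vector [\<i>, 0]]"
definition sigma3 :: qop where "sigma3 = vector [vector [1, 0], vector [0, -1]]"

definition pauli :: "3 \<Rightarrow> qop" where
  "pauli j = (if j = 1 then sigma1 else if j = 2 then sigma2 else sigma3)"

definition kron :: "qop \<Rightarrow> qop \<Rightarrow> qop2" where
  "kron A B = (\<chi> p q. A $ fst p $ fst q * B $ snd p $ snd q)"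

definition pauli_dot :: "real^3 \<Rightarrow> qop" where
  "pauli_dot a = (\<chi> i k. \<Sum>j\<in>UNIV. complex_of_real (a $ j) * pauli j $ i $ k)"

definition hermitian2 :: "qop2 \<Rightarrow> bool" where
  "hermitian2 \<rho> \<longleftrightarrow> (\<forall>p q. \<rho> $ p $ q = cnj (\<rho> $ q $ p))"

definition psd2 :: "qop2 \<Rightarrow> bool" where
  "psd2 \<rho> \<longleftrightarrow> hermitian2 \<rho> \<and>
     (\<forall>v :: complex^(2 \<times> 2). 0 \<le> Re (\<Sum>p\<in>UNIV. \<Sum>q\<in>UNIV. cnj (v $ p) * \<rho> $ p $ q * v $ q))"

definition two_qubit_state :: "qop2 \<Rightarrow> bool" where
  "two_qubit_state \<rho> \<longleftrightarrow> psd2 \<rho> \<and> trace \<rho> = 1"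

text \<open>Correlation matrix T_jk = tr(rho sigma_j (x) sigma_k) (a real number for Hermitian rho).\<close>
definition correlation :: "qop2 \<Rightarrow> real^3^3" where
  "correlation \<rho> = (\<chi> j k. Re (trace (\<rho> ** kron (pauli j) (pauli k))))"

definition diag3 :: "real^3 \<Rightarrow> real^3^3" where
  "diag3 d = (\<chi> i j. if i = j then d $ i else 0)"

definition chsh_ops :: "qop2 set" where
  "chsh_ops = {kron (pauli_dot a) (pauli_dot b + pauli_dot b') + kron (pauli_dot a') (pauli_dot b - pauli_dot b')
              | a a' b b'. norm a = 1 \<and> norm a' = 1 \<and> norm b = 1 \<and> norm b' = 1}"

definition chsh_expect :: "qop2 \<Rightarrow> qop2 \<Rightarrow> real" where
  "chsh_expect \<rho> S = Re (trace (\<rho> ** S))"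

definition nonlocality :: "qop2 \<Rightarrow> real" where
  "nonlocality \<rho> = (SUP S\<in>chsh_ops. chsh_expect \<rho> S)"

definition optimal_chsh :: "qop2 \<Rightarrow> qop2 \<Rightarrow> bool" where
  "optimal_chsh \<rho> S \<longleftrightarrow> S \<in> chsh_ops \<and> chsh_expect \<rho> S = nonlocality \<rho>"

end

theory Submission
  imports Defs
begin

unbundle cross3_syntax


definition Mset :: "(real^3^3) set" where
  "Mset = {M. det M = 0 \<and> norm M = 2}"

lemma inner_mat3: "inner (A::real^3^3) B = (\<Sum>i\<in>UNIV. \<Sum>j\<in>UNIV. A$i$j * B$i$j)"
  by (simp add: inner_vec_def)

lemma inner_mult_left: "inner ((A::real^3^3) ** (B::real^3^3)) C = inner B (transpose A ** C)"
  unfolding inner_vec_def matrix_matrix_mult_def transpose_def by (simp add: sum_3 vec_lambda_beta) (simp add: algebra_simps)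

lemma inner_mult_right: "inner ((A::real^3^3) ** (B::real^3^3)) C = inner A (C ** transpose B)"
  unfolding inner_vec_def matrix_matrix_mult_def transpose_def by (simp add: sum_3 vec_lambda_beta) (simp add: algebra_simps)

lemma orth_TQ: "orthogonal_matrix (Q::real^3^3) \<Longrightarrow> transpose Q ** Q = mat 1"
  by (simp add: orthogonal_matrix_def)
lemma orth_QT: "orthogonal_matrix (Q::real^3^3) \<Longrightarrow> Q ** transpose Q = mat 1"
  by (simp add: orthogonal_matrix_def)

lemma inner_orth_move:
  assumes "orthogonal_matrix U" "orthogonal_matrix V"
  shows "inner (T::real^3^3) (U ** X ** V) = inner (transpose U ** T ** transpose V) X"
proof -
  have "inner T (U ** X ** V) = inner (U ** X ** V) T" by (simp add: inner_commute)
  also have "\<dots> = inner (X ** V) (transpose U ** T)" by (simp add: inner_mult_left matrix_mul_assoc[symmetric])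
  also have "\<dots> = inner X (transpose U ** T ** transpose V)" by (simp add: inner_mult_right)
  finally show ?thesis by (simp add: inner_commute)
qed

lemma inner_orth_inv:
  assumes "orthogonal_matrix U" "orthogonal_matrix V"
  shows "inner (U ** X ** V) (U ** Y ** V) = inner (X::real^3^3) Y"
proof -
  have "inner (U ** X ** V) (U ** Y ** V) = inner (transpose U ** (U ** X ** V) ** transpose V) Y"
    using inner_orth_move[OF assms] by (simp add: inner_commute)
  also have "transpose U ** (U ** X ** V) ** transpose V = (transpose U ** U) ** X ** (V ** transpose V)"
    by (simp add: matrix_mul_assoc)
  also have "\<dots> = X" using assms by (simp add: orth_TQ orth_QT)
  finally show ?thesis .
qed

lemma norm_orth_inv:
  assumes "orthogonal_matrix U" "orthogonal_matrix V"
  shows "norm (U ** X ** V) = norm (X::real^3^3)"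
  using inner_orth_inv[OF assms, of X X] by (simp add: norm_eq_sqrt_inner)

lemma det_orth_ne0: "orthogonal_matrix (U::real^3^3) \<Longrightarrow> det U \<noteq> 0"
  using det_orthogonal_matrix by fastforce

lemma det_orth_prod: 
  assumes "orthogonal_matrix U" "orthogonal_matrix V"
  shows "det (U ** X ** V) = 0 \<longleftrightarrow> det (X::real^3^3) = 0"
  using det_orth_ne0[OF assms(1)] det_orth_ne0[OF assms(2)] by (simp add: det_mul)

lemma Mset_orth:
  assumes "orthogonal_matrix U" "orthogonal_matrix V"
  shows "U ** X ** V \<in> Mset \<longleftrightarrow> X \<in> Mset"
  using det_orth_prod[OF assms] norm_orth_inv[OF assms] by (simp add: Mset_def)

lemma diag3_entry: "(U ** diag3 s ** V) $ i $ j = (\<Sum>l\<in>UNIV. U$i$l * s$l * V$l$j)"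
  by (simp add: matrix_matrix_mult_def diag3_def sum_3)

lemma det_diag3: "det (diag3 s) = s$1 * s$2 * s$3"
  by (simp add: det_3 diag3_def)

lemma inner_diag3: "inner (diag3 s) (diag3 m) = (\<Sum>l\<in>UNIV. s$l * m$l)"
  by (simp add: inner_vec_def diag3_def sum_3)

lemma det_scaleR3: "det (c *\<^sub>R (A::real^3^3)) = c^3 * det A"
  by (simp add: det_3 algebra_simps power3_eq_cube)

lemma UNIV3_distinct: "distinct [i,j,k::3] \<Longrightarrow> (UNIV::3 set) = {i,j,k}"
  using exhaust_3[of i] exhaust_3[of j] exhaust_3[of k] by (auto simp: UNIV_3)

lemma sum3_distinct: "distinct [i,j,k::3] \<Longrightarrow> sum f UNIV = f i + f j + f k"
  by (simp add: UNIV3_distinct add_ac)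

lemma ker_of_det0:
  fixes A :: "real^3^3"
  assumes "det A = 0"
  shows "\<exists>n. norm n = 1 \<and> A *v n = 0"
proof -
  have "\<not> invertible A" using assms invertible_det_nz by blast
  then have "\<not> (\<exists>B. B ** A = mat 1)" by (meson invertible_def matrix_left_right_inverse)
  then obtain x where x: "A *v x = 0" "x \<noteq> 0" using matrix_left_invertible_ker by blast
  define n where "n = (1/norm x) *\<^sub>R x"
  have "norm n = 1" using x by (simp add: n_def)
  moreover have "A *v n = 0" using x by (simp add: n_def matrix_vector_mult_scaleR)
  ultimately show ?thesis by blast
qed



lemma quad_zero:
  fixes k c \<delta> :: real
  assumes "\<delta> > 0" and h: "\<forall>t. \<bar>t\<bar> < \<delta> \<longrightarrow> t*k + t^2*c \<le> 0"
  shows "k = 0"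
proof (rule ccontr)
  assume k: "k \<noteq> 0"
  define e where "e = min (\<delta>/2) (\<bar>k\<bar>/(\<bar>c\<bar>+1))"
  have e0: "e > 0" using k assms(1) by (simp add: e_def)
  have e1: "e < \<delta>" using assms(1) by (simp add: e_def)
  have e2: "e * (\<bar>c\<bar>+1) \<le> \<bar>k\<bar>"
  proof -
    have "e \<le> \<bar>k\<bar>/(\<bar>c\<bar>+1)" by (simp add: e_def)
    then show ?thesis by (simp add: field_simps)
  qed
  define t where "t = sgn k * e"
  have "\<bar>t\<bar> = e" using k e0 by (simp add: t_def abs_mult sgn_if)
  then have "\<bar>t\<bar> < \<delta>" using e1 by simp
  then have "t*k + t^2*c \<le> 0" using h by blast
  moreover have "t*k = e * \<bar>k\<bar>" by (simp add: t_def abs_sgn sgn_mult_abs mult.commute mult.left_commute)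
  moreover have "t^2 = e^2" using k by (simp add: t_def power_mult_distrib sgn_if)
  ultimately have "e * \<bar>k\<bar> + e^2 * c \<le> 0" by simp
  moreover have "e^2 * c \<ge> - (e^2 * \<bar>c\<bar>)" using mult_left_mono[of "-\<bar>c\<bar>" c "e^2"] by simp
  ultimately have "e * \<bar>k\<bar> \<le> e * (e * \<bar>c\<bar>)" by (simp add: power2_eq_square)
  then have "\<bar>k\<bar> \<le> e * \<bar>c\<bar>" using e0 by simp
  with e2 e0 show False by (simp add: algebra_simps)
qed

lemma first_order:
  fixes A :: "real^3^3"
  assumes "norm y0 = 1" "inner y0 z = 0" "norm (A *v y0) = s"
    and b: "\<forall>t. norm (A *v (y0 + t *\<^sub>R z)) \<le> s * norm (y0 + t *\<^sub>R z)"
  shows "inner (A *v y0) (A *v z) = 0"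
proof -
  have s0: "s \<ge> 0" using assms(3) by auto
  have "\<forall>t. \<bar>t\<bar> < 1 \<longrightarrow> t * (2 * inner (A *v y0) (A *v z)) + t^2 * ((norm (A *v z))^2 - s^2 * (norm z)^2) \<le> 0"
  proof (intro allI impI)
    fix t :: real
    have "(norm (A *v (y0 + t *\<^sub>R z)))^2 \<le> (s * norm (y0 + t *\<^sub>R z))^2"
      using b norm_ge_zero power_mono by blast
    moreover have "(norm (A *v (y0 + t *\<^sub>R z)))^2 = s^2 + 2*t*inner (A *v y0) (A *v z) + t^2 * (norm (A *v z))^2"
      unfolding assms(3)[symmetric] matrix_vector_right_distrib matrix_vector_mult_scaleR power2_norm_eq_inner
      by (simp add: inner_add_left inner_add_right inner_commute power2_eq_square algebra_simps)
    moreover have "(norm (y0 + t *\<^sub>R z))^2 = 1 + t^2 * (norm z)^2"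
      using assms(1,2) unfolding power2_norm_eq_inner
      by (simp add: norm_eq_1 inner_add_left inner_add_right inner_commute power2_eq_square algebra_simps)
    then have "(s * norm (y0 + t *\<^sub>R z))^2 = s^2 * (1 + t^2 * (norm z)^2)"
      by (simp add: power_mult_distrib)
    ultimately show "t * (2 * inner (A *v y0) (A *v z)) + t^2 * ((norm (A *v z))^2 - s^2 * (norm z)^2) \<le> 0"
      by (simp add: algebra_simps)
  qed
  from quad_zero[OF _ this] show ?thesis by simp
qed

lemma perp_exists: "\<exists>z::real^3. norm z = 1 \<and> inner y z = 0"
proof (cases "y = 0")
  case True
  then show ?thesis by (intro exI[of _ "axis 1 1"]) simp
next
  case False
  have "y \<times> axis 1 1 \<noteq> 0 \<or> y \<times> axis 2 1 \<noteq> 0"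
  proof (rule ccontr)
    assume "\<not> ?thesis"
    then have "y \<times> axis 1 1 = 0" "y \<times> axis 2 1 = 0" by auto
    then have "y = 0" by (simp add: cross3_def vec_eq_iff forall_3 axis_def)
    with False show False by simp
  qed
  then obtain w where w: "w \<noteq> 0" "inner y w = 0" using dot_cross_self(1) by blast
  show ?thesis using w by (intro exI[of _ "(1/norm w) *\<^sub>R w"]) simp
qed

lemma orth_rows3:
  fixes x1 x2 x3 :: "real^3"
  assumes "norm x1 = 1" "norm x2 = 1" "norm x3 = 1" "inner x1 x2 = 0" "inner x1 x3 = 0" "inner x2 x3 = 0"
  shows "orthogonal_matrix (vector [x1,x2,x3] :: real^3^3)"
proof -
  have r: "\<And>i. row i (vector [x1,x2,x3] :: real^3^3) = (vector [x1,x2,x3] :: real^3^3) $ i"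
    by (simp add: row_def vec_eq_iff)
  show ?thesis unfolding orthogonal_matrix_orthonormal_rows r
    using assms by (auto simp: forall_3 orthogonal_def inner_commute)
qed

lemma onb_expand:
  fixes x1 x2 x3 v :: "real^3"
  assumes "norm x1 = 1" "norm x2 = 1" "norm x3 = 1" "inner x1 x2 = 0" "inner x1 x3 = 0" "inner x2 x3 = 0"
  shows "v = inner x1 v *\<^sub>R x1 + inner x2 v *\<^sub>R x2 + inner x3 v *\<^sub>R x3"
proof -
  define Q where "Q = (vector [x1,x2,x3] :: real^3^3)"
  have "transpose Q ** Q = mat 1" using orth_rows3[OF assms] by (simp add: Q_def orthogonal_matrix_def)
  then have "v = (transpose Q ** Q) *v v" by simp
  also have "\<dots> = inner x1 v *\<^sub>R x1 + inner x2 v *\<^sub>R x2 + inner x3 v *\<^sub>R x3"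
    unfolding Q_def
    by (simp add: vec_eq_iff matrix_vector_mult_def matrix_matrix_mult_def transpose_def inner_vec_def sum_3 forall_3 algebra_simps)
  finally show ?thesis .
qed

lemma cross_unit:
  fixes x1 x2 :: "real^3"
  assumes "norm x1 = 1" "norm x2 = 1" "inner x1 x2 = 0"
  shows "norm (x1 \<times> x2) = 1" "inner x1 (x1 \<times> x2) = 0" "inner x2 (x1 \<times> x2) = 0"
proof -
  have "(norm (x1 \<times> x2))^2 = 1" using norm_cross[of x1 x2] assms by simp
  then show "norm (x1 \<times> x2) = 1" using norm_ge_zero[of "x1 \<times> x2"] by (auto simp: power2_eq_1_iff)
  show "inner x1 (x1 \<times> x2) = 0" by (simp add: dot_cross_self)
  show "inner x2 (x1 \<times> x2) = 0" using dot_cross_self(3)[of x1 x2] by (simp add: inner_commute)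
qed



lemma scale_bound:
  fixes A :: "real^3^3"
  assumes "\<And>y. P y \<Longrightarrow> norm y = 1 \<Longrightarrow> norm (A *v y) \<le> s"
    and "\<And>y c. P y \<Longrightarrow> P (c *\<^sub>R y)" and "P y"
  shows "norm (A *v y) \<le> s * norm y"
proof (cases "y = 0")
  case True then show ?thesis by simp
next
  case False
  define y' where "y' = (1/norm y) *\<^sub>R y"
  have "norm y' = 1" using False by (simp add: y'_def)
  moreover have "P y'" using assms(2,3) by (simp add: y'_def)
  ultimately have "norm (A *v y') \<le> s" using assms(1) by blast
  moreover have "A *v y' = (1/norm y) *\<^sub>R (A *v y)" by (simp add: y'_def matrix_vector_mult_scaleR)
  ultimately have "norm (A *v y) / norm y \<le> s" by simp
  then show ?thesis using False by (simp add: divide_le_eq mult.commute)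
qed

lemma matrix_zero_if_kills:
  fixes A :: "real^3^3"
  assumes "\<And>y. A *v y = 0"
  shows "A = 0"
proof -
  have "column k A = 0" for k using assms[of "axis k 1"] by (simp add: matrix_vector_mult_basis)
  then show ?thesis by (simp add: vec_eq_iff column_def) 
qed

lemma svd3:
  fixes A :: "real^3^3"
  shows "\<exists>U V s. orthogonal_matrix U \<and> orthogonal_matrix V \<and> A = U ** diag3 s ** V \<and>
                 s$2 \<le> s$1 \<and> \<bar>s$3\<bar> \<le> s$2"
proof -
  have cont: "continuous_on X (\<lambda>y. norm (A *v y))" for X by (intro continuous_intros)
  have ne1: "sphere (0::real^3) 1 \<noteq> {}" using norm_axis_1[of 1] by (auto simp: dist_norm)
  obtain y1 where y1: "y1 \<in> sphere 0 1" and y1max: "\<forall>y\<in>sphere 0 1. norm (A *v y) \<le> norm (A *v y1)"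
    using continuous_attains_sup[OF compact_sphere ne1 cont] by blast
  define s1 where "s1 = norm (A *v y1)"
  have ny1: "norm y1 = 1" using y1 by simp
  have bound1: "norm (A *v y) \<le> s1 * norm y" for y
    by (rule scale_bound[where P="\<lambda>_. True"]) (use y1max in \<open>auto simp: s1_def\<close>)
  have F1: "inner (A *v y1) (A *v z) = 0" if "inner y1 z = 0" for z
    by (rule first_order[OF ny1 that s1_def[symmetric]]) (simp add: bound1)
  define S2 where "S2 = sphere (0::real^3) 1 \<inter> {y. inner y1 y = 0}"
  have cS2: "compact S2" unfolding S2_def by (intro compact_Int_closed compact_sphere closed_hyperplane)
  obtain w where w: "norm w = 1" "inner y1 w = 0" using perp_exists by blast
  have ne2: "S2 \<noteq> {}" using w by (auto simp: S2_def)
  obtain y2 where y2: "y2 \<in> S2" and y2max: "\<forall>y\<in>S2. norm (A *v y) \<le> norm (A *v y2)"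
    using continuous_attains_sup[OF cS2 ne2 cont] by blast
  define s2 where "s2 = norm (A *v y2)"
  have ny2: "norm y2 = 1" and y12: "inner y1 y2 = 0" using y2 by (auto simp: S2_def)
  have bound2: "norm (A *v y) \<le> s2 * norm y" if "inner y1 y = 0" for y
    by (rule scale_bound[where P="\<lambda>y. inner y1 y = 0"]) (use y2max that in \<open>auto simp: s2_def S2_def\<close>)
  have F2: "inner (A *v y2) (A *v z) = 0" if "inner y1 z = 0" "inner y2 z = 0" for z
  proof (rule first_order[OF ny2 that(2) s2_def[symmetric]], intro allI)
    fix t :: real
    show "norm (A *v (y2 + t *\<^sub>R z)) \<le> s2 * norm (y2 + t *\<^sub>R z)"
      by (rule bound2) (simp add: inner_add_right y12 that(1))
  qed
  define y3 where "y3 = y1 \<times> y2"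
  have ny3: "norm y3 = 1" and y13: "inner y1 y3 = 0" and y23: "inner y2 y3 = 0"
    using cross_unit[OF ny1 ny2 y12] by (auto simp: y3_def)
  have s21: "s2 \<le> s1" using bound1[of y2] ny2 by (simp add: s2_def)
  have s2pos: "s2 \<ge> 0" by (simp add: s2_def)
  have Ay12: "inner (A *v y1) (A *v y2) = 0" using F1 y12 by blast
  have Ay13: "inner (A *v y1) (A *v y3) = 0" using F1 y13 by blast
  have Ay23: "inner (A *v y2) (A *v y3) = 0" using F2 y13 y23 by blast
  have nAy3: "norm (A *v y3) \<le> s2" using bound2[OF y13] ny3 by simp
  show ?thesis
  proof (cases "s1 = 0")
    case True
    have "A *v y = 0" for y using bound1[of y] True by simp
    then have "A = 0" by (rule matrix_zero_if_kills)
    moreover have "diag3 0 = (0::real^3^3)" by (simp add: diag3_def vec_eq_iff)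
    ultimately show ?thesis
      by (intro exI[of _ "mat 1"] exI[of _ "0::real^3"]) (simp add: orthogonal_matrix_id)
  next
    case False
    then have s1pos: "s1 > 0" by (simp add: s1_def)
    define x1 where "x1 = (1/s1) *\<^sub>R (A *v y1)"
    have nx1: "norm x1 = 1" using s1pos by (simp add: x1_def s1_def)
    have Ay1: "A *v y1 = s1 *\<^sub>R x1" using s1pos by (simp add: x1_def)
    obtain x2 where nx2: "norm x2 = 1" and x12: "inner x1 x2 = 0" and Ay2: "A *v y2 = s2 *\<^sub>R x2"
    proof (cases "s2 = 0")
      case True
      obtain z where "norm z = 1" "inner x1 z = 0" using perp_exists by blast
      moreover have "A *v y2 = s2 *\<^sub>R z" using True by (simp add: s2_def)
      ultimately show ?thesis using that by blast
    next
      case False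
      then have s2p: "s2 > 0" using s2pos by simp
      define z where "z = (1/s2) *\<^sub>R (A *v y2)"
      have "norm z = 1" using s2p by (simp add: z_def s2_def)
      moreover have "inner x1 z = 0" using Ay12 by (simp add: x1_def z_def)
      moreover have "A *v y2 = s2 *\<^sub>R z" using s2p by (simp add: z_def)
      ultimately show ?thesis using that by blast
    qed
    define x3 where "x3 = x1 \<times> x2"
    have nx3: "norm x3 = 1" and x13: "inner x1 x3 = 0" and x23: "inner x2 x3 = 0"
      using cross_unit[OF nx1 nx2 x12] by (auto simp: x3_def)
    define s3 where "s3 = inner x3 (A *v y3)"
    have i1: "inner x1 (A *v y3) = 0" using Ay13 Ay1 s1pos by simp
    have i2: "inner x2 (A *v y3) = 0"
    proof (cases "s2 = 0")
      case True then have "A *v y3 = 0" using nAy3 by simp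
      then show ?thesis by simp
    next
      case False then show ?thesis using Ay23 Ay2 by simp
    qed
    have Ay3: "A *v y3 = s3 *\<^sub>R x3"
      using onb_expand[OF nx1 nx2 nx3 x12 x13 x23, of "A *v y3"] i1 i2 by (simp add: s3_def)
    have s3b: "\<bar>s3\<bar> \<le> s2"
    proof -
      have "\<bar>s3\<bar> \<le> norm x3 * norm (A *v y3)" unfolding s3_def by (rule Cauchy_Schwarz_ineq2)
      then show ?thesis using nx3 nAy3 by simp
    qed
    define V where "V = (vector [y1,y2,y3] :: real^3^3)"
    define U where "U = transpose (vector [x1,x2,x3] :: real^3^3)"
    define s where "s = (vector [s1,s2,s3] :: real^3)"
    have oV: "orthogonal_matrix V" unfolding V_def by (rule orth_rows3[OF ny1 ny2 ny3 y12 y13 y23])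
    have oU: "orthogonal_matrix U" unfolding U_def orthogonal_matrix_transpose
      by (rule orth_rows3[OF nx1 nx2 nx3 x12 x13 x23])
    have "A ** transpose V = U ** diag3 s"
    proof -
      have "(A ** transpose V) $ i $ l = (U ** diag3 s) $ i $ l" for i l
      proof -
        have c1: "(A ** transpose V) $ i $ 1 = (A *v y1) $ i" 
          by (simp add: V_def matrix_matrix_mult_def matrix_vector_mult_def transpose_def)
        have c2: "(A ** transpose V) $ i $ 2 = (A *v y2) $ i" 
          by (simp add: V_def matrix_matrix_mult_def matrix_vector_mult_def transpose_def)
        have c3: "(A ** transpose V) $ i $ 3 = (A *v y3) $ i" 
          by (simp add: V_def matrix_matrix_mult_def matrix_vector_mult_def transpose_def)
        have d: "(U ** diag3 s) $ i $ l = U $ i $ l * s $ l"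
          using exhaust_3[of l] by (auto simp: matrix_matrix_mult_def diag3_def sum_3)
        show ?thesis using exhaust_3[of l] c1 c2 c3 d Ay1 Ay2 Ay3
          by (auto simp: U_def s_def transpose_def mult.commute)
      qed
      then show ?thesis by (simp add: vec_eq_iff)
    qed
    then have "A = U ** diag3 s ** V"
      using orth_TQ[OF oV] by (metis matrix_mul_assoc matrix_mul_rid)
    moreover have "s$2 \<le> s$1" "\<bar>s$3\<bar> \<le> s$2" using s21 s3b by (simp_all add: s_def)
    ultimately show ?thesis using oU oV by blast
  qed
qed



lemma sum4_swap:
  "(\<Sum>a\<in>A. \<Sum>b\<in>B. \<Sum>c\<in>C. \<Sum>d\<in>D. f a b c d) = (\<Sum>c\<in>C. \<Sum>d\<in>D. \<Sum>a\<in>A. \<Sum>b\<in>B. f a b c d)"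
proof -
  have "(\<Sum>a\<in>A. \<Sum>b\<in>B. \<Sum>c\<in>C. \<Sum>d\<in>D. f a b c d) = (\<Sum>a\<in>A. \<Sum>c\<in>C. \<Sum>b\<in>B. \<Sum>d\<in>D. f a b c d)"
    by (rule sum.cong[OF refl], rule sum.swap)
  also have "\<dots> = (\<Sum>a\<in>A. \<Sum>c\<in>C. \<Sum>d\<in>D. \<Sum>b\<in>B. f a b c d)"
    by (rule sum.cong[OF refl], rule sum.cong[OF refl], rule sum.swap)
  also have "\<dots> = (\<Sum>c\<in>C. \<Sum>a\<in>A. \<Sum>d\<in>D. \<Sum>b\<in>B. f a b c d)"
    by (rule sum.swap)
  also have "\<dots> = (\<Sum>c\<in>C. \<Sum>d\<in>D. \<Sum>a\<in>A. \<Sum>b\<in>B. f a b c d)"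
    by (rule sum.cong[OF refl], rule sum.swap)
  finally show ?thesis .
qed

lemma trace_kron_pd:
  fixes \<rho> :: qop2
  shows "Re (trace (\<rho> ** kron (pauli_dot x) (pauli_dot y))) =
    (\<Sum>j\<in>UNIV. \<Sum>k\<in>UNIV. x$j * y$k * correlation \<rho> $ j $ k)"
proof -
  have "trace (\<rho> ** kron (pauli_dot x) (pauli_dot y)) =
     (\<Sum>j\<in>UNIV. \<Sum>k\<in>UNIV. of_real (x$j * y$k) * trace (\<rho> ** kron (pauli j) (pauli k)))"
    unfolding trace_def matrix_matrix_mult_def kron_def pauli_dot_def
    apply (simp add: sum_product sum_distrib_left sum_distrib_right mult_ac)
    apply (subst sum4_swap)
    apply (subst sum.swap[where B="UNIV::3 set"])
    apply (subst sum.swap[where B="UNIV::(2\<times>2) set"])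
    apply (subst sum.swap[where B="UNIV::(2\<times>2) set"])
    apply (simp add: mult_ac)
    done
  then show ?thesis
    by (simp add: correlation_def Re_sum)
qed


lemma norm2_iff: "norm (X::real^3^3) = 2 \<longleftrightarrow> inner X X = 4"
proof -
  have e: "inner X X = (norm X)^2" by (simp add: power2_norm_eq_inner)
  show ?thesis
  proof
    assume "norm X = 2" then show "inner X X = 4" using e by simp
  next
    assume "inner X X = 4"
    then have "(norm X)^2 = 2^2" using e by simp
    then show "norm X = 2" using norm_ge_zero[of X] power2_eq_imp_eq by (metis zero_le_numeral)
  qed
qed

definition Mof :: "real^3 \<Rightarrow> real^3 \<Rightarrow> real^3 \<Rightarrow> real^3 \<Rightarrow> real^3^3" where
  "Mof a a' b b' = (\<chi> j k. a$j * (b$k + b'$k) + a'$j * (b$k - b'$k))"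

definition Sof :: "real^3 \<Rightarrow> real^3 \<Rightarrow> real^3 \<Rightarrow> real^3 \<Rightarrow> qop2" where
  "Sof a a' b b' = kron (pauli_dot a) (pauli_dot b + pauli_dot b') + kron (pauli_dot a') (pauli_dot b - pauli_dot b')"

lemma pd_add: "pauli_dot b + pauli_dot b' = pauli_dot (b + b')"
  by (simp add: pauli_dot_def vec_eq_iff sum.distrib[symmetric] algebra_simps)

lemma pd_diff: "pauli_dot b - pauli_dot b' = pauli_dot (b - b')"
  by (simp add: pauli_dot_def vec_eq_iff sum_subtractf[symmetric] algebra_simps)

lemma trace_add2: "trace ((A::qop2) + B) = trace A + trace B"
  by (simp add: trace_def sum.distrib)

lemma expect_Sof: "chsh_expect \<rho> (Sof a a' b b') = inner (correlation \<rho>) (Mof a a' b b')"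
  unfolding chsh_expect_def Sof_def pd_add pd_diff matrix_add_ldistrib trace_add2 plus_complex.sel trace_kron_pd
  by (simp add: inner_vec_def Mof_def sum_3 algebra_simps)

lemma Mof_inner: "inner (Mof a a' b b') (Mof a a' b b') =
   inner a a * inner (b+b') (b+b') + inner a' a' * inner (b-b') (b-b') + 2 * inner a a' * inner (b+b') (b-b')"
  by (simp add: inner_vec_def Mof_def sum_3 algebra_simps power2_eq_square)

lemma Mof_in:
  assumes "norm a = 1" "norm a' = 1" "norm b = 1" "norm b' = 1"
  shows "Mof a a' b b' \<in> Mset"
proof -
  have d: "det (Mof a a' b b') = 0" by (simp add: det_3 Mof_def algebra_simps)
  have aa: "inner a a = 1" "inner a' a' = 1" "inner b b = 1" "inner b' b' = 1"
    using assms by (simp_all add: norm_eq_1)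
  have "inner (b+b') (b+b') = 2 + 2 * inner b b'" "inner (b-b') (b-b') = 2 - 2 * inner b b'"
     "inner (b+b') (b-b') = 0"
    using aa by (simp_all add: inner_add_left inner_add_right inner_diff_left inner_diff_right inner_commute)
  then have "inner (Mof a a' b b') (Mof a a' b b') = 4" using aa by (simp add: Mof_inner)
  then have "norm (Mof a a' b b') = 2" by (simp add: norm_eq_sqrt_inner)
  with d show ?thesis by (simp add: Mset_def)
qed

lemma svd_Mset:
  assumes "M \<in> Mset" "orthogonal_matrix U" "orthogonal_matrix V" "M = U ** diag3 s ** V"
    "s$2 \<le> s$1" "\<bar>s$3\<bar> \<le> s$2"
  shows "s$3 = 0" "(s$1)^2 + (s$2)^2 = 4" "s$1 > 0"
proof -
  have "det (diag3 s) = 0" using assms(1,4) det_orth_prod[OF assms(2,3)] by (simp add: Mset_def)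
  then have "s$1 * s$2 * s$3 = 0" by (simp add: det_diag3)
  then show s3: "s$3 = 0" using assms(5,6) by (auto simp: mult_eq_0_iff)
  have "norm (diag3 s) = 2" using assms(1,4) norm_orth_inv[OF assms(2,3)] by (simp add: Mset_def)
  then have "inner (diag3 s) (diag3 s) = 4" by (simp add: norm2_iff)
  then show sq: "(s$1)^2 + (s$2)^2 = 4" using s3 by (simp add: inner_diag3 sum_3 power2_eq_square)
  show "s$1 > 0"
  proof (rule ccontr)
    assume "\<not> s$1 > 0"
    then have "s$1 = 0" "s$2 = 0" using assms(5,6) by auto
    with sq show False by simp
  qed
qed

lemma Mset_Mof:
  assumes "M \<in> Mset"
  shows "\<exists>a a' b b'. norm a = 1 \<and> norm a' = 1 \<and> norm b = 1 \<and> norm b' = 1 \<and> M = Mof a a' b b'"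
proof -
  obtain U V s where oU: "orthogonal_matrix U" and oV: "orthogonal_matrix V" and M: "M = U ** diag3 s ** V"
    and o: "s$2 \<le> s$1" "\<bar>s$3\<bar> \<le> s$2"
    using svd3 by blast
  note sv = svd_Mset[OF assms oU oV M o]
  define a where "a = column 1 U"
  define a' where "a' = column 2 U"
  define u where "u = s$1 *\<^sub>R row 1 V"
  define w where "w = s$2 *\<^sub>R row 2 V"
  define b where "b = (1/2) *\<^sub>R (u + w)"
  define b' where "b' = (1/2) *\<^sub>R (u - w)"
  have na: "norm a = 1" "norm a' = 1" using oU unfolding orthogonal_matrix_orthonormal_columns a_def a'_def by auto
  have r: "norm (row 1 V) = 1" "norm (row 2 V) = 1" "inner (row 1 V) (row 2 V) = 0"
    using oV unfolding orthogonal_matrix_orthonormal_rows orthogonal_def by auto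
  have uu: "inner u u = (s$1)^2" "inner w w = (s$2)^2" "inner u w = 0"
    using r by (simp_all add: u_def w_def norm_eq_1 power2_eq_square)
  have "inner b b = 1" "inner b' b' = 1"
    using uu sv(2) by (simp_all add: b_def b'_def inner_add_left inner_add_right inner_diff_left inner_diff_right inner_commute algebra_simps)
  then have nb: "norm b = 1" "norm b' = 1" by (simp_all add: norm_eq_1)
  have "M = Mof a a' b b'"
    using sv(1) unfolding M
    by (simp add: vec_eq_iff diag3_entry sum_3 Mof_def a_def a'_def b_def b'_def u_def w_def column_def row_def algebra_simps)
  with na nb show ?thesis by blast
qed

definition opt :: "real^3^3 \<Rightarrow> real^3^3 \<Rightarrow> bool" where
  "opt T M \<longleftrightarrow> M \<in> Mset \<and> (\<forall>M'\<in>Mset. inner T M' \<le> inner T M)"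

lemma chsh_ops_eq: "chsh_ops = {Sof a a' b b' | a a' b b'. norm a = 1 \<and> norm a' = 1 \<and> norm b = 1 \<and> norm b' = 1}"
  by (simp add: chsh_ops_def Sof_def)

lemma expect_image: "chsh_expect \<rho> ` chsh_ops = (\<lambda>M. inner (correlation \<rho>) M) ` Mset"
proof
  show "chsh_expect \<rho> ` chsh_ops \<subseteq> (\<lambda>M. inner (correlation \<rho>) M) ` Mset"
    unfolding chsh_ops_eq using Mof_in expect_Sof by fastforce
next
  show "(\<lambda>M. inner (correlation \<rho>) M) ` Mset \<subseteq> chsh_expect \<rho> ` chsh_ops"
  proof
    fix x assume "x \<in> (\<lambda>M. inner (correlation \<rho>) M) ` Mset"
    then obtain M where M: "M \<in> Mset" "x = inner (correlation \<rho>) M" by blast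
    obtain a a' b b' where p: "norm a = 1" "norm a' = 1" "norm b = 1" "norm b' = 1" "M = Mof a a' b b'"
      using Mset_Mof[OF M(1)] by blast
    have "Sof a a' b b' \<in> chsh_ops" using p unfolding chsh_ops_eq by blast
    moreover have "x = chsh_expect \<rho> (Sof a a' b b')" using M p by (simp add: expect_Sof)
    ultimately show "x \<in> chsh_expect \<rho> ` chsh_ops" by blast
  qed
qed

lemma bdd_inner: "bdd_above ((\<lambda>M. inner T M) ` Mset)"
proof (rule bdd_aboveI)
  fix x assume "x \<in> (\<lambda>M. inner T M) ` Mset"
  then obtain M where "M \<in> Mset" "x = inner T M" by blast
  then show "x \<le> norm T * 2" using norm_cauchy_schwarz[of T M] by (simp add: Mset_def)
qed

lemma sup_iff: fixes X :: "real set"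
  assumes "x \<in> X" "bdd_above X" shows "x = Sup X \<longleftrightarrow> (\<forall>y\<in>X. y \<le> x)"
  using assms cSup_upper cSup_eq_maximum by metis

lemma nonloc_eq: "nonlocality \<rho> = Sup ((\<lambda>M. inner (correlation \<rho>) M) ` Mset)"
  by (simp add: nonlocality_def expect_image)

lemma optimal_Sof:
  assumes "norm a = 1" "norm a' = 1" "norm b = 1" "norm b' = 1"
  shows "optimal_chsh \<rho> (Sof a a' b b') \<longleftrightarrow> opt (correlation \<rho>) (Mof a a' b b')"
proof -
  have inS: "Sof a a' b b' \<in> chsh_ops" using assms unfolding chsh_ops_eq by blast
  have inM: "Mof a a' b b' \<in> Mset" using Mof_in[OF assms] .
  have "optimal_chsh \<rho> (Sof a a' b b') \<longleftrightarrow>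
        inner (correlation \<rho>) (Mof a a' b b') = Sup ((\<lambda>M. inner (correlation \<rho>) M) ` Mset)"
    using inS by (simp add: optimal_chsh_def expect_Sof nonloc_eq)
  also have "\<dots> \<longleftrightarrow> (\<forall>y\<in>(\<lambda>M. inner (correlation \<rho>) M) ` Mset. y \<le> inner (correlation \<rho>) (Mof a a' b b'))"
    using inM by (intro sup_iff bdd_inner) auto
  finally show ?thesis using inM by (auto simp: opt_def)
qed

lemma LHS_iff:
  "(\<exists>S. optimal_chsh \<rho> S \<and> optimal_chsh \<rho>' S) \<longleftrightarrow> (\<exists>M. opt (correlation \<rho>) M \<and> opt (correlation \<rho>') M)"
proof
  assume "\<exists>S. optimal_chsh \<rho> S \<and> optimal_chsh \<rho>' S"
  then obtain S where S: "optimal_chsh \<rho> S" "optimal_chsh \<rho>' S" by blast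
  then have "S \<in> chsh_ops" by (simp add: optimal_chsh_def)
  then obtain a a' b b' where p: "norm a = 1" "norm a' = 1" "norm b = 1" "norm b' = 1" "S = Sof a a' b b'"
    unfolding chsh_ops_eq by blast
  then show "\<exists>M. opt (correlation \<rho>) M \<and> opt (correlation \<rho>') M"
    using S optimal_Sof[OF p(1-4)] by blast
next
  assume "\<exists>M. opt (correlation \<rho>) M \<and> opt (correlation \<rho>') M"
  then obtain M where M: "opt (correlation \<rho>) M" "opt (correlation \<rho>') M" by blast
  then have "M \<in> Mset" by (simp add: opt_def)
  then obtain a a' b b' where p: "norm a = 1" "norm a' = 1" "norm b = 1" "norm b' = 1" "M = Mof a a' b b'"
    using Mset_Mof by blast
  then show "\<exists>S. optimal_chsh \<rho> S \<and> optimal_chsh \<rho>' S"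
    using M optimal_Sof[OF p(1-4)] by blast
qed



lemma mm_diff_l: "(A::real^3^3) ** (B - C) = A ** B - A ** C"
  by (simp add: vec_eq_iff matrix_matrix_mult_def sum_3 algebra_simps)
lemma mm_diff_r: "((A::real^3^3) - B) ** C = A ** C - B ** C"
  by (simp add: vec_eq_iff matrix_matrix_mult_def sum_3 algebra_simps)
lemma mm_add_r: "((A::real^3^3) + B) ** C = A ** C + B ** C"
  by (simp add: vec_eq_iff matrix_matrix_mult_def sum_3 algebra_simps)
lemma mm_scale_l: "(A::real^3^3) ** (c *\<^sub>R B) = c *\<^sub>R (A ** B)"
  by (simp add: vec_eq_iff matrix_matrix_mult_def sum_3 algebra_simps)
lemma mm_scale_r: "(c *\<^sub>R (A::real^3^3)) ** B = c *\<^sub>R (A ** B)"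
  by (simp add: vec_eq_iff matrix_matrix_mult_def sum_3 algebra_simps)
lemma transpose_diag3: "transpose (diag3 s) = diag3 s"
  by (simp add: vec_eq_iff transpose_def diag3_def)
lemma diag3_right: "((A::real^3^3) ** diag3 s) $ p $ q = A$p$q * s$q"
  using exhaust_3[of q] by (auto simp: matrix_matrix_mult_def diag3_def sum_3)
lemma diag3_left: "(diag3 s ** (A::real^3^3)) $ p $ q = s$p * A$p$q"
  using exhaust_3[of p] by (auto simp: matrix_matrix_mult_def diag3_def sum_3)

lemma orth_cancel:
  assumes "orthogonal_matrix U" "orthogonal_matrix V"
  shows "U ** (transpose U ** X ** transpose V) ** V = (X::real^3^3)"
        "transpose U ** (U ** X ** V) ** transpose V = X"
proof -
  have "U ** (transpose U ** X ** transpose V) ** V = (U ** transpose U) ** X ** (transpose V ** V)"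
    by (simp add: matrix_mul_assoc)
  then show "U ** (transpose U ** X ** transpose V) ** V = X" using assms by (simp add: orth_TQ orth_QT)
  have "transpose U ** (U ** X ** V) ** transpose V = (transpose U ** U) ** X ** (V ** transpose V)"
    by (simp add: matrix_mul_assoc)
  then show "transpose U ** (U ** X ** V) ** transpose V = X" using assms by (simp add: orth_TQ orth_QT)
qed

lemma diag_upper:
  assumes "M \<in> Mset" "distinct [i,j,k]" "\<bar>d$i\<bar> \<ge> \<bar>d$j\<bar>" "\<bar>d$j\<bar> \<ge> \<bar>d$k\<bar>"
  shows "inner (diag3 d) M \<le> 2 * sqrt ((d$i)^2 + (d$j)^2)"
proof -
  obtain n where nn: "norm n = 1" and Mn: "M *v n = 0" using ker_of_det0 assms(1) by (auto simp: Mset_def)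
  define P :: "real^3^3" where "P = (\<chi> a b. (if a = b then 1 else 0) - n$a * n$b)"
  have Mn': "(M *v n) $ a = 0" for a using Mn by simp
  have "M ** P = M"
  proof -
    have "(M ** P) $ a $ b = M $ a $ b - (M *v n) $ a * n $ b" for a b
      using exhaust_3[of b] by (auto simp: P_def matrix_matrix_mult_def matrix_vector_mult_def sum_3 algebra_simps)
    then show ?thesis using Mn' by (simp add: vec_eq_iff)
  qed
  then have "inner (diag3 d) M = inner M (diag3 d ** transpose P)"
    using inner_mult_right[of M P "diag3 d"] by (simp add: inner_commute)
  also have "\<dots> \<le> norm M * norm (diag3 d ** transpose P)" by (rule norm_cauchy_schwarz)
  finally have i1: "inner (diag3 d) M \<le> 2 * norm (diag3 d ** transpose P)" using assms(1) by (simp add: Mset_def)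
  have N: "(n$1)^2 + (n$2)^2 + (n$3)^2 = 1" using nn by (simp add: norm_eq_1 inner_vec_def sum_3 power2_eq_square)
  have "inner (diag3 d ** transpose P) (diag3 d ** transpose P) =
     (d$1)^2 * (1 - 2*(n$1)^2 + (n$1)^2 * ((n$1)^2 + (n$2)^2 + (n$3)^2)) +
     (d$2)^2 * (1 - 2*(n$2)^2 + (n$2)^2 * ((n$1)^2 + (n$2)^2 + (n$3)^2)) +
     (d$3)^2 * (1 - 2*(n$3)^2 + (n$3)^2 * ((n$1)^2 + (n$2)^2 + (n$3)^2))"
    by (simp add: inner_vec_def P_def matrix_matrix_mult_def transpose_def diag3_def sum_3 algebra_simps power2_eq_square)
  also have "\<dots> = (\<Sum>l\<in>UNIV. (d$l)^2 * (1 - (n$l)^2))" using N by (simp add: sum_3 algebra_simps)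
  also have "\<dots> = (d$i)^2 * (1 - (n$i)^2) + (d$j)^2 * (1 - (n$j)^2) + (d$k)^2 * (1 - (n$k)^2)"
    by (rule sum3_distinct[OF assms(2)])
  also have "\<dots> \<le> (d$i)^2 + (d$j)^2"
  proof -
    have Ni: "(n$i)^2 + (n$j)^2 + (n$k)^2 = 1" using N sum3_distinct[OF assms(2), of "\<lambda>l. (n$l)^2"] by (simp add: sum_3)
    have "(d$k)^2 \<le> (d$j)^2" "(d$j)^2 \<le> (d$i)^2" using assms(3,4) by (simp_all add: abs_le_square_iff)
    then have "(d$k)^2 * (n$i)^2 \<le> (d$i)^2 * (n$i)^2" "(d$k)^2 * (n$j)^2 \<le> (d$j)^2 * (n$j)^2"
      by (simp_all add: mult_right_mono)
    then show ?thesis using Ni by (simp add: algebra_simps) (smt (verit) distrib_left mult.commute mult_cancel_left2)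
  qed
  finally have "norm (diag3 d ** transpose P) \<le> sqrt ((d$i)^2 + (d$j)^2)"
    by (simp add: norm_eq_sqrt_inner)
  with i1 show ?thesis by linarith
qed

lemma gen_upper:
  assumes "orthogonal_matrix U" "orthogonal_matrix V" "M \<in> Mset"
    "distinct [i,j,k]" "\<bar>d$i\<bar> \<ge> \<bar>d$j\<bar>" "\<bar>d$j\<bar> \<ge> \<bar>d$k\<bar>"
  shows "inner (U ** diag3 d ** V) M \<le> 2 * sqrt ((d$i)^2 + (d$j)^2)"
proof -
  have oU: "orthogonal_matrix (transpose U)" and oV: "orthogonal_matrix (transpose V)" using assms by auto
  have "inner (U ** diag3 d ** V) M = inner (transpose U ** M ** transpose V) (diag3 d)"
    using inner_orth_move[OF assms(1,2), of M "diag3 d"] by (simp add: inner_commute)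
  also have "\<dots> = inner (diag3 d) (transpose U ** M ** transpose V)" by (simp add: inner_commute)
  also have "\<dots> \<le> 2 * sqrt ((d$i)^2 + (d$j)^2)"
    by (rule diag_upper[OF _ assms(4-6)]) (simp add: Mset_orth[OF oU oV] assms(3))
  finally show ?thesis .
qed

lemma attain:
  assumes "orthogonal_matrix U" "orthogonal_matrix V" "distinct [i,j,k]"
    and r: "sqrt ((d$i)^2 + (d$j)^2) > 0"
  defines "m \<equiv> (\<chi> l. if l = i then 2 * d$i / sqrt ((d$i)^2 + (d$j)^2)
                   else if l = j then 2 * d$j / sqrt ((d$i)^2 + (d$j)^2) else 0) :: real^3"
  shows "U ** diag3 m ** V \<in> Mset"
    "inner (U ** diag3 e ** V) (U ** diag3 m ** V) = 2 * (e$i * d$i + e$j * d$j) / sqrt ((d$i)^2 + (d$j)^2)"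
proof -
  let ?r = "sqrt ((d$i)^2 + (d$j)^2)"
  have ij: "i \<noteq> j" "i \<noteq> k" "j \<noteq> k" using assms(3) by auto
  have mk: "m$k = 0" using ij by (simp add: m_def)
  have mi: "m$i = 2 * d$i / ?r" and mj: "m$j = 2 * d$j / ?r" using ij by (simp_all add: m_def)
  have "det (diag3 m) = 0" using mk exhaust_3[of k] by (auto simp: det_diag3)
  moreover have "inner (diag3 m) (diag3 m) = 4"
  proof -
    have "inner (diag3 m) (diag3 m) = m$i * m$i + m$j * m$j + m$k * m$k"
      by (simp add: inner_diag3 sum3_distinct[OF assms(3)])
    also have "\<dots> = 4 * ((d$i)^2 + (d$j)^2) / ?r^2" using mk mi mj by (simp add: power2_eq_square add_divide_distrib)
    also have "\<dots> = 4"
    proof -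
      have X: "(d$i)^2 + (d$j)^2 \<noteq> 0" using r by auto
      have "?r^2 = (d$i)^2 + (d$j)^2" by simp
      then show ?thesis using nonzero_mult_div_cancel_right[OF X, of 4] by simp
    qed
    finally show ?thesis .
  qed
  ultimately have "diag3 m \<in> Mset" by (simp add: Mset_def norm2_iff)
  then show "U ** diag3 m ** V \<in> Mset" using Mset_orth[OF assms(1,2)] by simp
  have "inner (U ** diag3 e ** V) (U ** diag3 m ** V) = inner (diag3 e) (diag3 m)"
    by (rule inner_orth_inv[OF assms(1,2)])
  also have "\<dots> = e$i * m$i + e$j * m$j + e$k * m$k"
    by (simp add: inner_diag3 sum3_distinct[OF assms(3)])
  also have "\<dots> = 2 * (e$i * d$i + e$j * d$j) / ?r" using mk mi mj by (simp add: field_simps add_divide_distrib)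
  finally show "inner (U ** diag3 e ** V) (U ** diag3 m ** V) = 2 * (e$i * d$i + e$j * d$j) / ?r" .
qed



lemma first_order_M:
  fixes T M X :: "real^3^3"
  assumes M: "M \<in> Mset" and mx: "\<forall>M'\<in>Mset. inner T M' \<le> inner T M" and v0: "inner T M > 0"
    and dX: "\<forall>t. det (M + t *\<^sub>R X) = 0"
  shows "inner T X = (inner T M / 4) * inner M X"
proof -
  define v where "v = inner T M"
  define p where "p = inner T X"
  define q where "q = inner M X"
  define r where "r = inner X X"
  have MM: "inner M M = 4" using M by (simp add: Mset_def norm2_iff)
  define \<delta> where "\<delta> = v / (\<bar>p\<bar> + 1)"
  have d0: "\<delta> > 0" using v0 by (simp add: \<delta>_def v_def)
  have "\<forall>t. \<bar>t\<bar> < \<delta> \<longrightarrow> t * (8 * v * p - 2 * v^2 * q) + t^2 * (4 * p^2 - v^2 * r) \<le> 0"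
  proof (intro allI impI)
    fix t :: real assume t: "\<bar>t\<bar> < \<delta>"
    define Mt where "Mt = M + t *\<^sub>R X"
    have iT: "inner T Mt = v + t * p" by (simp add: Mt_def v_def p_def inner_add_right)
    have "\<bar>t * p\<bar> < v"
    proof -
      have "\<bar>t * p\<bar> = \<bar>t\<bar> * \<bar>p\<bar>" by (simp add: abs_mult)
      also have "\<dots> \<le> \<delta> * \<bar>p\<bar>" using t by (simp add: mult_right_mono)
      also have "\<dots> < v" using v0 by (simp add: \<delta>_def v_def field_simps)
      finally show ?thesis .
    qed
    then have pos: "v + t * p > 0" by linarith
    then have "Mt \<noteq> 0" using iT by auto
    then have nMt: "norm Mt > 0" by simp
    define M2 where "M2 = (2 / norm Mt) *\<^sub>R Mt"
    have "M2 \<in> Mset" using dX nMt by (simp add: M2_def Mset_def det_scaleR3 Mt_def)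
    then have "inner T M2 \<le> v" using mx by (simp add: v_def)
    then have "(2 / norm Mt) * (v + t * p) \<le> v" using iT by (simp add: M2_def)
    then have le: "2 * (v + t * p) \<le> v * norm Mt" using nMt by (simp add: field_simps)
    have "(2 * (v + t * p))^2 \<le> (v * norm Mt)^2"
      using le pos by (intro power_mono) auto
    moreover have "(norm Mt)^2 = 4 + 2 * t * q + t^2 * r"
      unfolding power2_norm_eq_inner Mt_def using MM
      by (simp add: q_def r_def inner_add_left inner_add_right inner_commute power2_eq_square algebra_simps)
    ultimately have "(2 * (v + t*p))^2 \<le> v^2 * (4 + 2 * t * q + t^2 * r)"
      by (metis power_mult_distrib)
    then show "t * (8 * v * p - 2 * v^2 * q) + t^2 * (4 * p^2 - v^2 * r) \<le> 0"
      by (simp add: power2_eq_square algebra_simps)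
  qed
  from quad_zero[OF d0 this] have "8 * v * p = 2 * v^2 * q" by simp
  then have "p = v * q / 4" using v0 by (simp add: v_def power2_eq_square algebra_simps)
  then show ?thesis by (simp add: p_def q_def v_def)
qed

definition Eij :: "3 \<Rightarrow> 3 \<Rightarrow> real^3^3" where
  "Eij i j = (\<chi> a b. if a = i \<and> b = j then 1 else 0)"

lemma mat1_E_left: "M + t *\<^sub>R (Eij i j ** M) = (mat 1 + t *\<^sub>R Eij i j) ** (M::real^3^3)"
  by (simp add: mm_add_r mm_scale_r)

lemma mat1_E_right: "M + t *\<^sub>R (M ** Eij i j) = (M::real^3^3) ** (mat 1 + t *\<^sub>R Eij i j)"
  by (simp add: matrix_add_ldistrib mm_scale_l)

lemma inner_E_left: "inner (G::real^3^3) (Eij i j ** (M::real^3^3)) = (G ** transpose M) $ i $ j"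
  using exhaust_3[of i] exhaust_3[of j]
  by (auto simp: Eij_def inner_vec_def matrix_matrix_mult_def transpose_def sum_3)

lemma inner_E_right: "inner (G::real^3^3) ((M::real^3^3) ** Eij i j) = (transpose M ** G) $ i $ j"
  using exhaust_3[of i] exhaust_3[of j]
  by (auto simp: Eij_def inner_vec_def matrix_matrix_mult_def transpose_def sum_3)

lemma GMT:
  fixes T M :: "real^3^3"
  assumes M: "M \<in> Mset" and mx: "\<forall>M'\<in>Mset. inner T M' \<le> inner T M" and v0: "inner T M > 0"
  defines "G \<equiv> T - (inner T M / 4) *\<^sub>R M"
  shows "G ** transpose M = 0" "transpose M ** G = 0"
proof -
  have dM: "det M = 0" using M by (simp add: Mset_def)
  have "(G ** transpose M) $ i $ j = 0" for i j
  proof -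
    have "\<forall>t. det (M + t *\<^sub>R (Eij i j ** M)) = 0" by (simp add: mat1_E_left det_mul dM)
    from first_order_M[OF M mx v0 this]
    have "inner G (Eij i j ** M) = 0" by (simp add: G_def inner_diff_left)
    then show ?thesis by (simp add: inner_E_left)
  qed
  then show "G ** transpose M = 0" by (simp add: vec_eq_iff)
  have "(transpose M ** G) $ i $ j = 0" for i j
  proof -
    have "\<forall>t. det (M + t *\<^sub>R (M ** Eij i j)) = 0" by (simp add: mat1_E_right det_mul dM)
    from first_order_M[OF M mx v0 this]
    have "inner G (M ** Eij i j) = 0" by (simp add: G_def inner_diff_left)
    then show ?thesis by (simp add: inner_E_right)
  qed
  then show "transpose M ** G = 0" by (simp add: vec_eq_iff)
qed

definition Ec :: "3 \<Rightarrow> 3 \<Rightarrow> real \<Rightarrow> real^3^3" where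
  "Ec p q c = (\<chi> a b. if a = p \<and> b = q then c else 0)"

lemma single_Mset:
  "Ec p q c \<in> Mset \<longleftrightarrow> \<bar>c\<bar> = 2"
proof -
  have d: "det (Ec p q c) = 0"
    using exhaust_3[of p] exhaust_3[of q] by (auto simp: det_3 Ec_def)
  have i: "inner (Ec p q c) (Ec p q c) = c^2"
    using exhaust_3[of p] exhaust_3[of q] by (auto simp: inner_vec_def sum_3 power2_eq_square Ec_def)
  have "c^2 = 4 \<longleftrightarrow> \<bar>c\<bar> = 2"
    by (metis abs_of_nonneg abs_power2 power2_abs power2_eq_imp_eq zero_le_numeral abs_ge_zero numeral_Bit0 numeral_One power2_eq_square  mult_2 one_add_one)
  then show ?thesis using d i by (simp add: Mset_def norm2_iff)
qed

lemma T_zero: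
  fixes T :: "real^3^3"
  assumes "\<forall>M'\<in>Mset. inner T M' \<le> 0"
  shows "T = 0"
proof -
  have "T $ p $ q = 0" for p q
  proof -
    have inn: "inner T (Ec p q c) = c * T$p$q" for c
      using exhaust_3[of p] exhaust_3[of q] by (auto simp: inner_vec_def sum_3 Ec_def)
    have "2 * T$p$q \<le> 0" using assms single_Mset[of p q 2] inn[of 2] by auto
    moreover have "-2 * T$p$q \<le> 0" using assms single_Mset[of p q "-2"] inn[of "-2"] by auto
    ultimately show ?thesis by linarith
  qed
  then show ?thesis by (simp add: vec_eq_iff)
qed



lemma diag3_zero: "diag3 0 = (0::real^3^3)"
  by (simp add: diag3_def vec_eq_iff)

lemma key:
  assumes opt: "opt T M" and oW: "orthogonal_matrix W" and oZ: "orthogonal_matrix Z"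
    and M: "M = W ** diag3 s ** Z" and s3: "s$3 = 0" and sq: "(s$1)^2 + (s$2)^2 = 4"
    and s1: "s$1 > 0" and s2: "s$2 \<ge> 0"
  shows "\<exists>c \<tau>. c \<ge> 0 \<and> \<bar>\<tau>\<bar> \<le> c * s$2 \<and> T = W ** diag3 (vector [c * s$1, c * s$2, \<tau>]) ** Z"
proof (cases "inner T M > 0")
  case False
  then have "\<forall>M'\<in>Mset. inner T M' \<le> 0" using opt by (force simp: opt_def)
  then have "T = 0" by (rule T_zero)
  moreover have "vector [0 * s$1, 0 * s$2, 0] = (0::real^3)" by (simp add: vec_eq_iff forall_3)
  ultimately show ?thesis by (intro exI[of _ 0] exI[of _ 0]) (simp add: diag3_zero)
next
  case True
  define v where "v = inner T M"
  have v0: "v > 0" using True by (simp add: v_def)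
  have Mm: "M \<in> Mset" and mx: "\<forall>M'\<in>Mset. inner T M' \<le> inner T M" using opt by (auto simp: opt_def)
  define G where "G = T - (v/4) *\<^sub>R M"
  have GM: "G ** transpose M = 0" "transpose M ** G = 0" using GMT[OF Mm mx True] by (simp_all add: G_def v_def)
  define T' where "T' = transpose W ** T ** transpose Z"
  define G' where "G' = transpose W ** G ** transpose Z"
  have MD: "transpose W ** M ** transpose Z = diag3 s" using orth_cancel(2)[OF oW oZ] M by simp
  have G'eq: "G' = T' - (v/4) *\<^sub>R diag3 s"
    unfolding G'_def T'_def G_def by (simp add: mm_diff_l mm_diff_r mm_scale_l mm_scale_r MD)
  have tM: "transpose M = transpose Z ** diag3 s ** transpose W"
    by (simp add: M matrix_transpose_mul transpose_diag3 matrix_mul_assoc)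
  have "transpose W ** (G ** transpose M) ** W = G' ** diag3 s ** (transpose W ** W)"
    by (simp add: tM G'_def matrix_mul_assoc)
  then have z1: "G' ** diag3 s = 0" using GM(1) orth_TQ[OF oW] by simp
  have "Z ** (transpose M ** G) ** transpose Z = (Z ** transpose Z) ** diag3 s ** G'"
    by (simp add: tM G'_def matrix_mul_assoc)
  then have z2: "diag3 s ** G' = 0" using GM(2) orth_QT[OF oZ] by simp
  have e1: "G'$p$q * s$q = 0" for p q using arg_cong[OF z1, of "\<lambda>X. X$p$q"] by (simp add: diag3_right)
  have e2: "s$p * G'$p$q = 0" for p q using arg_cong[OF z2, of "\<lambda>X. X$p$q"] by (simp add: diag3_left)
  have T'e: "T'$p$q = G'$p$q + v/4 * (if p = q then s$p else 0)" for p q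
    using G'eq by (simp add: diag3_def)
  have g1: "G'$1$q = 0" "G'$q$1 = 0" for q using e1[of q 1] e2[of 1 q] s1 by auto
  have a11: "T'$1$1 = v * s$1 / 4" using T'e[of 1 1] g1 by simp
  have bnd: "(T'$p$q)^2 \<le> (v * s$2 / 4)^2" if pq: "p \<noteq> 1" "q \<noteq> 1" for p q
  proof -
    define \<alpha> where "\<alpha> = T'$1$1"
    define \<beta> where "\<beta> = T'$p$q"
    define r where "r = sqrt (\<alpha>^2 + \<beta>^2)"
    have "v * s$1 > 0" using v0 s1 by simp
    then have ap: "\<alpha> > 0" using a11 by (simp add: \<alpha>_def)
    have r2: "r^2 = \<alpha>^2 + \<beta>^2" by (simp add: r_def)
    have rp: "r > 0" using ap by (simp add: r_def add_pos_nonneg)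
    define X :: "real^3^3" where "X = (\<chi> a b. if a = 1 \<and> b = 1 then 2*\<alpha>/r else if a = p \<and> b = q then 2*\<beta>/r else 0)"
    have p23: "p = 2 \<or> p = 3" "q = 2 \<or> q = 3" using pq exhaust_3[of p] exhaust_3[of q] by auto
    have dX: "det X = 0" using p23 by (auto simp: det_3 X_def)
    have "inner X X = (2*\<alpha>/r)^2 + (2*\<beta>/r)^2"
      using p23 by (auto simp: inner_vec_def sum_3 X_def power2_eq_square)
    also have "\<dots> = 4 * (\<alpha>^2 + \<beta>^2) / r^2" by (simp add: power_divide algebra_simps add_divide_distrib)
    also have "\<dots> = 4 * r^2 / r^2" using r2 by simp
    also have "\<dots> = 4" using rp by simp
    finally have "X \<in> Mset" using dX by (simp add: Mset_def norm2_iff)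
    then have "W ** X ** Z \<in> Mset" using Mset_orth[OF oW oZ] by simp
    then have "inner T (W ** X ** Z) \<le> v" using mx by (simp add: v_def)
    moreover have "inner T (W ** X ** Z) = inner T' X" unfolding T'_def by (rule inner_orth_move[OF oW oZ])
    moreover have "inner T' X = T'$1$1 * (2*\<alpha>/r) + T'$p$q * (2*\<beta>/r)"
      using p23 by (auto simp: inner_vec_def sum_3 X_def)
    moreover have "T'$1$1 * (2*\<alpha>/r) + T'$p$q * (2*\<beta>/r) = 2 * r"
    proof -
      have "T'$1$1 * (2*\<alpha>/r) + T'$p$q * (2*\<beta>/r) = 2 * r^2 / r"
        using r2 by (simp add: \<alpha>_def \<beta>_def power2_eq_square add_divide_distrib mult_ac)
      then show ?thesis using rp by (simp add: power2_eq_square)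
    qed
    ultimately have "2 * r \<le> v" by simp
    then have "(2*r)^2 \<le> v^2" using rp by (intro power_mono) auto
    then have "4 * (\<alpha>^2 + \<beta>^2) \<le> v^2" using r2 by (simp add: power_mult_distrib)
    moreover have "\<alpha>^2 = v^2 * (s$1)^2 / 16"
    proof -
      have h: "\<alpha> * 4 = v * s$1" using a11 by (simp add: \<alpha>_def)
      have "(\<alpha> * 4)^2 = (v * s$1)^2" using h by simp
      then show ?thesis by (simp add: power_mult_distrib)
    qed
    ultimately have "\<beta>^2 \<le> v^2 * (4 - (s$1)^2) / 16" by (simp add: algebra_simps)
    moreover have "4 - (s$1)^2 = (s$2)^2" using sq by simp
    ultimately show ?thesis by (simp add: \<beta>_def power_mult_distrib power_divide)
  qed
  have b0: "T'$p$q = 0" if "p \<noteq> 1" "q \<noteq> 1" "s$2 = 0" for p q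
    using bnd[OF that(1,2)] that(3) by simp
  have a22: "T'$2$2 = v * s$2 / 4"
  proof (cases "s$2 = 0")
    case True then show ?thesis using b0[of 2 2] by simp
  next
    case False then have "G'$2$2 = 0" using e1[of 2 2] by simp
    then show ?thesis using T'e[of 2 2] by simp
  qed
  have a23: "T'$2$3 = 0" "T'$3$2 = 0"
  proof -
    show "T'$2$3 = 0"
    proof (cases "s$2 = 0")
      case True then show ?thesis using b0[of 2 3] by simp
    next
      case False then have "G'$2$3 = 0" using e2[of 2 3] by simp
      then show ?thesis using T'e[of 2 3] by simp
    qed
    show "T'$3$2 = 0"
    proof (cases "s$2 = 0")
      case True then show ?thesis using b0[of 3 2] by simp
    next
      case False then have "G'$3$2 = 0" using e1[of 3 2] by simp
      then show ?thesis using T'e[of 3 2] by simp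
    qed
  qed
  have a1q: "T'$1$2 = 0" "T'$1$3 = 0" "T'$2$1 = 0" "T'$3$1 = 0"
    using T'e[of 1 2] T'e[of 1 3] T'e[of 2 1] T'e[of 3 1] g1 by simp_all
  define \<tau> where "\<tau> = T'$3$3"
  have tb: "\<bar>\<tau>\<bar> \<le> v/4 * s$2"
  proof -
    have "\<tau>^2 \<le> (v * s$2 / 4)^2" using bnd[of 3 3] by (simp add: \<tau>_def)
    then have "\<bar>\<tau>\<bar> \<le> \<bar>v * s$2 / 4\<bar>" by (metis abs_le_square_iff)
    then show ?thesis using v0 s2 by simp
  qed
  have "T' = diag3 (vector [v/4 * s$1, v/4 * s$2, \<tau>])"
    using a11 a22 a23 a1q unfolding vec_eq_iff
    by (auto simp: forall_3 diag3_def \<tau>_def)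
  then have "T = W ** diag3 (vector [v/4 * s$1, v/4 * s$2, \<tau>]) ** Z"
    using orth_cancel(1)[OF oW oZ, of T] by (simp add: T'_def)
  then show ?thesis using tb v0 by (intro exI[of _ "v/4"] exI[of _ \<tau>]) simp
qed



lemma zero_opt: "M \<in> Mset \<Longrightarrow> opt 0 M"
  by (simp add: opt_def)

lemma rhs_to_opt:
  assumes oU: "orthogonal_matrix U" and oV: "orthogonal_matrix V"
    and T: "T = U ** diag3 t ** V" and F: "F = U ** diag3 f ** V"
    and ijk: "distinct [i, j, k]"
    and o1: "\<bar>t $ i\<bar> \<ge> \<bar>t $ j\<bar>" "\<bar>t $ j\<bar> \<ge> \<bar>t $ k\<bar>"
    and o2: "\<bar>f $ i\<bar> \<ge> \<bar>f $ j\<bar>" "\<bar>f $ j\<bar> \<ge> \<bar>f $ k\<bar>"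
    and h1: "t $ i * sqrt ((f $ i)\<^sup>2 + (f $ j)\<^sup>2) = f $ i * sqrt ((t $ i)\<^sup>2 + (t $ j)\<^sup>2)"
    and h2: "t $ j * sqrt ((f $ i)\<^sup>2 + (f $ j)\<^sup>2) = f $ j * sqrt ((t $ i)\<^sup>2 + (t $ j)\<^sup>2)"
  shows "\<exists>M. opt T M \<and> opt F M"
proof -
  define rt where "rt = sqrt ((t $ i)\<^sup>2 + (t $ j)\<^sup>2)"
  define rf where "rf = sqrt ((f $ i)\<^sup>2 + (f $ j)\<^sup>2)"
  have upT: "\<forall>M'\<in>Mset. inner T M' \<le> 2 * rt" unfolding T rt_def using gen_upper[OF oU oV _ ijk o1] by blast
  have upF: "\<forall>M'\<in>Mset. inner F M' \<le> 2 * rf" unfolding F rf_def using gen_upper[OF oU oV _ ijk o2] by blast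
  have rt2: "rt^2 = (t $ i)\<^sup>2 + (t $ j)\<^sup>2" by (simp add: rt_def)
  have rf2: "rf^2 = (f $ i)\<^sup>2 + (f $ j)\<^sup>2" by (simp add: rf_def)
  have rt0: "rt \<ge> 0" and rf0: "rf \<ge> 0" by (simp_all add: rt_def rf_def)
  have zero_of: "d = 0" if "sqrt ((d $ i)\<^sup>2 + (d $ j)\<^sup>2) = 0" "\<bar>d $ j\<bar> \<ge> \<bar>d $ k\<bar>" for d :: "real^3"
  proof -
    have "(d $ i)\<^sup>2 + (d $ j)\<^sup>2 = 0" using that(1) by simp
    then have "d $ i = 0" "d $ j = 0" by (auto simp: add_nonneg_eq_0_iff)
    moreover then have "d $ k = 0" using that(2) by simp
    ultimately have "d $ l = 0" for l using UNIV3_distinct[OF ijk] by (metis UNIV_I empty_iff insert_iff)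
    then show ?thesis by (simp add: vec_eq_iff)
  qed
  show ?thesis
  proof (cases "rt > 0")
    case True
    define m :: "real^3" where "m = (\<chi> l. if l = i then 2 * t$i / rt else if l = j then 2 * t$j / rt else 0)"
    note at = attain[OF oU oV ijk True[unfolded rt_def]]
    have M0: "U ** diag3 m ** V \<in> Mset" unfolding m_def rt_def rf_def by (rule at(1))
    have iT: "inner T (U ** diag3 m ** V) = 2 * rt"
    proof -
      have "inner T (U ** diag3 m ** V) = 2 * (t$i * t$i + t$j * t$j) / rt" unfolding T m_def rt_def by (rule at(2))
      also have "\<dots> = 2 * rt^2 / rt" using rt2 by (simp add: power2_eq_square)
      also have "\<dots> = 2 * rt" using True by (simp add: power2_eq_square)
      finally show ?thesis .
    qed
    have iF: "inner F (U ** diag3 m ** V) = 2 * rf"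
    proof -
      have e: "inner F (U ** diag3 m ** V) = 2 * (f$i * t$i + f$j * t$j) / rt" unfolding F m_def rt_def rf_def by (rule at(2))
      show ?thesis
      proof (cases "rf > 0")
        case True
        have "(f$i * t$i + f$j * t$j) * rf = rt * rf^2"
          using h1 h2 rf2 by (simp add: rt_def rf_def algebra_simps power2_eq_square)
        then have "f$i * t$i + f$j * t$j = rt * rf" using True by (simp add: power2_eq_square)
        then show ?thesis using e \<open>rt > 0\<close> by simp
      next
        case False
        then have "rf = 0" using rf0 by simp
        then have "f = 0" using zero_of[of f] o2 by (simp add: rf_def)
        then show ?thesis using e \<open>rf = 0\<close> by simp
      qed
    qed
    show ?thesis using M0 upT upF iT iF by (auto simp: opt_def)
  next
    case False
    then have "rt = 0" using rt0 by simp
    then have "t = 0" using zero_of[of t] o1 by (simp add: rt_def)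
    then have T0: "T = 0" by (simp add: T diag3_zero)
    show ?thesis
    proof (cases "rf > 0")
      case True
      define m :: "real^3" where "m = (\<chi> l. if l = i then 2 * f$i / rf else if l = j then 2 * f$j / rf else 0)"
      note at = attain[OF oU oV ijk True[unfolded rf_def]]
      have M0: "U ** diag3 m ** V \<in> Mset" unfolding m_def rt_def rf_def by (rule at(1))
      have iF: "inner F (U ** diag3 m ** V) = 2 * rf"
      proof -
        have "inner F (U ** diag3 m ** V) = 2 * (f$i * f$i + f$j * f$j) / rf" unfolding F m_def rt_def rf_def by (rule at(2))
        also have "\<dots> = 2 * rf^2 / rf" using rf2 by (simp add: power2_eq_square)
        also have "\<dots> = 2 * rf" using True by (simp add: power2_eq_square)
        finally show ?thesis .
      qed
      show ?thesis using M0 upF iF T0 by (auto simp: opt_def)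
    next
      case False
      then have "rf = 0" using rf0 by simp
      then have "f = 0" using zero_of[of f] o2 by (simp add: rf_def)
      then have F0: "F = 0" by (simp add: F diag3_zero)
      have "Ec 1 1 2 \<in> Mset" by (simp add: single_Mset)
      then show ?thesis using T0 F0 zero_opt by blast
    qed
  qed
qed

theorem theorem1:
  fixes \<rho> \<rho>' :: "complex^(2 \<times> 2)^(2 \<times> 2)"
  assumes "two_qubit_state \<rho>" and "two_qubit_state \<rho>'"
  shows "(\<exists>S. optimal_chsh \<rho> S \<and> optimal_chsh \<rho>' S) \<longleftrightarrow>
    (\<exists>(U :: real^3^3) (V :: real^3^3) (t :: real^3) (f :: real^3).
       orthogonal_matrix U \<and> orthogonal_matrix V \<and>
       correlation \<rho> = U ** diag3 t ** V \<and> correlation \<rho>' = U ** diag3 f ** V \<and>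
       (\<exists>i j k :: 3. distinct [i, j, k] \<and>
          \<bar>t $ i\<bar> \<ge> \<bar>t $ j\<bar> \<and> \<bar>t $ j\<bar> \<ge> \<bar>t $ k\<bar> \<and>
          \<bar>f $ i\<bar> \<ge> \<bar>f $ j\<bar> \<and> \<bar>f $ j\<bar> \<ge> \<bar>f $ k\<bar> \<and>
          t $ i * f $ j = t $ j * f $ i \<and>
          t $ i * sqrt ((f $ i)\<^sup>2 + (f $ j)\<^sup>2) = f $ i * sqrt ((t $ i)\<^sup>2 + (t $ j)\<^sup>2) \<and>
          t $ j * sqrt ((f $ i)\<^sup>2 + (f $ j)\<^sup>2) = f $ j * sqrt ((t $ i)\<^sup>2 + (t $ j)\<^sup>2)))"
  (is "?L \<longleftrightarrow> ?R")
proof -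
  define T where "T = correlation \<rho>"
  define F where "F = correlation \<rho>'"
  have "?L \<longleftrightarrow> (\<exists>M. opt T M \<and> opt F M)" unfolding T_def F_def by (rule LHS_iff)
  also have "\<dots> \<longleftrightarrow> ?R"
  proof
    assume "\<exists>M. opt T M \<and> opt F M"
    then obtain M where oT: "opt T M" and oF: "opt F M" by blast
    then have Mm: "M \<in> Mset" by (simp add: opt_def)
    obtain W Z s where oW: "orthogonal_matrix W" and oZ: "orthogonal_matrix Z" and M: "M = W ** diag3 s ** Z"
      and so: "s$2 \<le> s$1" "\<bar>s$3\<bar> \<le> s$2"
      using svd3 by blast
    note sv = svd_Mset[OF Mm oW oZ M so]
    have s2: "s$2 \<ge> 0" using so(2) by linarith
    obtain c \<tau> where c: "c \<ge> 0" "\<bar>\<tau>\<bar> \<le> c * s$2" and Te: "T = W ** diag3 (vector [c * s$1, c * s$2, \<tau>]) ** Z"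
      using key[OF oT oW oZ M sv(1,2,3) s2] by blast
    obtain c' \<tau>' where c': "c' \<ge> 0" "\<bar>\<tau>'\<bar> \<le> c' * s$2" and Fe: "F = W ** diag3 (vector [c' * s$1, c' * s$2, \<tau>']) ** Z"
      using key[OF oF oW oZ M sv(1,2,3) s2] by blast
    have sqt: "sqrt ((c * s$1)^2 + (c * s$2)^2) = 2 * c"
    proof -
      have "(c * s$1)^2 + (c * s$2)^2 = c^2 * ((s$1)^2 + (s$2)^2)" by (simp add: power_mult_distrib algebra_simps)
      also have "\<dots> = (2 * c)^2" using sv(2) by (simp add: power_mult_distrib)
      finally have e: "(c * s$1)^2 + (c * s$2)^2 = (2 * c)^2" .
      show ?thesis by (rule real_sqrt_unique) (use e c(1) in simp_all)
    qed
    have sqf: "sqrt ((c' * s$1)^2 + (c' * s$2)^2) = 2 * c'"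
    proof -
      have "(c' * s$1)^2 + (c' * s$2)^2 = c'^2 * ((s$1)^2 + (s$2)^2)" by (simp add: power_mult_distrib algebra_simps)
      also have "\<dots> = (2 * c')^2" using sv(2) by (simp add: power_mult_distrib)
      finally have e: "(c' * s$1)^2 + (c' * s$2)^2 = (2 * c')^2" .
      show ?thesis by (rule real_sqrt_unique) (use e c'(1) in simp_all)
    qed
    have m1: "c * s$2 \<le> c * s$1" "c' * s$2 \<le> c' * s$1" using so(1) c(1) c'(1) by (simp_all add: mult_left_mono)
    have p1: "c * s$2 \<ge> 0" "c' * s$2 \<ge> 0" using c(1) c'(1) s2 by simp_all
    show ?R
      apply (rule exI[of _ W], rule exI[of _ Z], rule exI[of _ "vector [c * s$1, c * s$2, \<tau>]"],
             rule exI[of _ "vector [c' * s$1, c' * s$2, \<tau>']"])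
      apply (intro conjI oW oZ)
        apply (simp add: T_def[symmetric] Te)
       apply (simp add: F_def[symmetric] Fe)
      apply (rule exI[of _ 1], rule exI[of _ 2], rule exI[of _ 3])
      using m1 p1 c c' sqt sqf sv(3) by (simp add: abs_of_nonneg)
  next
    assume ?R
    then obtain U V t f i j k where oU: "orthogonal_matrix U" and oV: "orthogonal_matrix V"
      and Te: "T = U ** diag3 t ** V" and Fe: "F = U ** diag3 f ** V"
      and ijk: "distinct [i, j, k]"
      and o1: "\<bar>t $ i\<bar> \<ge> \<bar>t $ j\<bar>" "\<bar>t $ j\<bar> \<ge> \<bar>t $ k\<bar>"
      and o2: "\<bar>f $ i\<bar> \<ge> \<bar>f $ j\<bar>" "\<bar>f $ j\<bar> \<ge> \<bar>f $ k\<bar>"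
      and h1: "t $ i * sqrt ((f $ i)\<^sup>2 + (f $ j)\<^sup>2) = f $ i * sqrt ((t $ i)\<^sup>2 + (t $ j)\<^sup>2)"
      and h2: "t $ j * sqrt ((f $ i)\<^sup>2 + (f $ j)\<^sup>2) = f $ j * sqrt ((t $ i)\<^sup>2 + (t $ j)\<^sup>2)"
      unfolding T_def F_def by blast
    show "\<exists>M. opt T M \<and> opt F M" by (rule rhs_to_opt[OF oU oV Te Fe ijk o1 o2 h1 h2])
  qed
  finally show ?thesis .
qed


end
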